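(* Let $p\ge1$, $\phi_1,\dots,\phi_p:\mathbb Z\to\mathbb C$, integers $t>s$ and $1\le m\le p$. Then $$\xi^{(m)}_{t,s}=\sum_{j=1}^{p-m+1}\phi_{m+j-1}(s+j)\,\xi_{t,s+j}.$$
   Context: Convention: $\phi_l(t)=0$ for $l>p$. For integers $t>u$ and $1\le m\le p$, $\Phi^{(m)}_{t,u}$ is the $(t-u)\times(t-u)$ lower Hessenberg matrix whose $(i,j)$ entry is: $\phi_{m+i-1}(u+i)$ if $j=1$; $-1$ if $j=i+1$; $\phi_{i-j+1}(u+i)$ if $2\le j\le i$; $0$ if $j>i+1$. For $t\ge u-p+1$: $\xi^{(m)}_{t,u}=\det\Phi^{(m)}_{t,u}$ if $t>u$; $\xi^{(m)}_{t,u}=1$ if $t=u-m+1$; $\xi^{(m)}_{t,u}=0$ if $u-p+1\le t\le u$, $t\ne u-m+1$. The principal determinant is $\xi_{t,u}=\xi^{(1)}_{t,u}$ (so $\xi_{u,u}=1$ and $\xi_{t,u}=0$ for $u-p+1\le t<u$). *)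

theory Defs
  imports Complex_Main "Jordan_Normal_Form.Determinant"
begin

definition phiz :: "nat \<Rightarrow> (nat \<Rightarrow> int \<Rightarrow> complex) \<Rightarrow> nat \<Rightarrow> int \<Rightarrow> complex" where
  "phiz p phi l t = (if l \<le> p then phi l t else 0)"

text \<open>The (t-u) x (t-u) lower Hessenberg matrix Phi^(m)_{t,u}; JNF matrices are 0-indexed,
  so entry (i,j) here is the paper's entry (i+1,j+1).\<close>
definition Phi_mat :: "nat \<Rightarrow> (nat \<Rightarrow> int \<Rightarrow> complex) \<Rightarrow> nat \<Rightarrow> int \<Rightarrow> int \<Rightarrow> complex mat" where
  "Phi_mat p phi m t u = mat (nat (t - u)) (nat (t - u))
     (\<lambda>(i0, j0). let i = i0 + 1; j = j0 + 1 in
        if j = 1 then phiz p phi (m + i - 1) (u + int i)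
        else if j = i + 1 then -1
        else if 2 \<le> j \<and> j \<le> i then phiz p phi (i - j + 1) (u + int i)
        else 0)"

text \<open>xi^(m)_{t,u}, meaningful for t \<ge> u - p + 1.\<close>
definition xi :: "nat \<Rightarrow> (nat \<Rightarrow> int \<Rightarrow> complex) \<Rightarrow> nat \<Rightarrow> int \<Rightarrow> int \<Rightarrow> complex" where
  "xi p phi m t u =
     (if t > u then det (Phi_mat p phi m t u)
      else if t = u - int m + 1 then 1 else 0)"

end

theory Submission
  imports Defs
begin

lemma Phi_entry:
  assumes "i < nat (t-u)" "j < nat (t-u)"
  shows "Phi_mat p phi m t u $$ (i,j) =
        (if j = 0 then phiz p phi (m + i) (u + int i + 1)
        else if j = i + 1 then -1
        else if j \<le> i then phiz p phi (i - j + 1) (u + int i + 1)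
        else 0)"
  using assms unfolding Phi_mat_def by (auto simp: Let_def ac_simps)

lemma minor_eq:
  fixes M B and p m :: nat and phi
  assumes i: "i < n" and n: "n = nat (t - s)"
  defines "M \<equiv> Phi_mat p phi m t s"
  defines "B \<equiv> mat_delete M i 0"
  shows "B = four_block_mat (mat i i (\<lambda>(r,c). B $$ (r,c))) (0\<^sub>m i (n-1-i))
              (mat (n-1-i) i (\<lambda>(r,c). B $$ (r+i,c))) (Phi_mat p phi 1 t (s + int i + 1))"
proof (rule eq_matI)
  have dB: "dim_row B = n - 1" "dim_col B = n - 1"
    unfolding B_def M_def Phi_mat_def n by auto
  have d4: "nat (t - (s + int i + 1)) = n - 1 - i" using i n by auto
  show "dim_row B = dim_row (four_block_mat (mat i i (\<lambda>(r,c). B $$ (r,c))) (0\<^sub>m i (n-1-i))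
              (mat (n-1-i) i (\<lambda>(r,c). B $$ (r+i,c))) (Phi_mat p phi 1 t (s + int i + 1)))"
    using dB d4 i unfolding Phi_mat_def by auto
  show "dim_col B = dim_col (four_block_mat (mat i i (\<lambda>(r,c). B $$ (r,c))) (0\<^sub>m i (n-1-i))
              (mat (n-1-i) i (\<lambda>(r,c). B $$ (r+i,c))) (Phi_mat p phi 1 t (s + int i + 1)))"
    using dB d4 i unfolding Phi_mat_def by auto
  fix r c assume r: "r < dim_row (four_block_mat (mat i i (\<lambda>(r,c). B $$ (r,c))) (0\<^sub>m i (n-1-i))
              (mat (n-1-i) i (\<lambda>(r,c). B $$ (r+i,c))) (Phi_mat p phi 1 t (s + int i + 1)))"
    and c: "c < dim_col (four_block_mat (mat i i (\<lambda>(r,c). B $$ (r,c))) (0\<^sub>m i (n-1-i))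
              (mat (n-1-i) i (\<lambda>(r,c). B $$ (r+i,c))) (Phi_mat p phi 1 t (s + int i + 1)))"
  have rc: "r < n - 1" "c < n - 1" using r c d4 i unfolding Phi_mat_def by auto
  have Bent: "B $$ (r', c') = M $$ (if r' < i then r' else Suc r', Suc c')" if "r' < n - 1" "c' < n - 1" for r' c'
    using that unfolding B_def mat_delete_def M_def Phi_mat_def n by auto
  show "B $$ (r, c) = four_block_mat (mat i i (\<lambda>(r,c). B $$ (r,c))) (0\<^sub>m i (n-1-i))
              (mat (n-1-i) i (\<lambda>(r,c). B $$ (r+i,c))) (Phi_mat p phi 1 t (s + int i + 1)) $$ (r, c)"
  proof (cases "r < i")
    case True
    then show ?thesis using rc Bent[OF rc] unfolding M_def
      by (subst index_mat_four_block; auto simp: Phi_mat_def d4 Phi_entry n)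
  next
    case False
    then show ?thesis using rc Bent[OF rc] d4 unfolding M_def
      by (subst index_mat_four_block; auto simp: Phi_mat_def d4 n Phi_entry ac_simps)
  qed
qed


lemma det_minor:
  fixes p m :: nat and phi
  assumes i: "i < n" and n: "n = nat (t - s)"
  shows "det (mat_delete (Phi_mat p phi m t s) i 0) = (-1)^i * xi p phi 1 t (s + int i + 1)"
proof -
  define M where "M = Phi_mat p phi m t s"
  define B where "B = mat_delete M i 0"
  have Bent: "B $$ (r', c') = M $$ (if r' < i then r' else Suc r', Suc c')" if "r' < n - 1" "c' < n - 1" for r' c'
    using that unfolding B_def mat_delete_def M_def Phi_mat_def n by auto
  define A1 where "A1 = mat i i (\<lambda>(r,c). B $$ (r,c))"
  have d4: "nat (t - (s + int i + 1)) = n - 1 - i" using i n by auto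
  have eq: "B = four_block_mat A1 (0\<^sub>m i (n-1-i))
              (mat (n-1-i) i (\<lambda>(r,c). B $$ (r+i,c))) (Phi_mat p phi 1 t (s + int i + 1))"
    unfolding A1_def B_def M_def by (rule minor_eq[OF i n])
  have detA1: "det A1 = (-1)^i"
  proof -
    have "det A1 = prod_list (diag_mat A1)"
    proof (rule det_lower_triangular[of i])
      fix r c assume "r < c" "c < i"
      then show "A1 $$ (r, c) = 0" unfolding A1_def using Bent[of r c] i n
        by (auto simp: M_def Phi_entry)
    qed (simp add: A1_def)
    also have "diag_mat A1 = replicate i (-1)"
      unfolding diag_mat_def A1_def using Bent i n
      by (auto intro!: nth_equalityI simp: M_def Phi_entry)
    finally show ?thesis by simp
  qed
  have detA4: "det (Phi_mat p phi 1 t (s + int i + 1)) = xi p phi 1 t (s + int i + 1)"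
  proof (cases "s + int i + 1 < t")
    case True then show ?thesis by (simp add: xi_def)
  next
    case False
    then have "t = s + int i + 1" using i n by auto
    then show ?thesis unfolding xi_def Phi_mat_def by (simp add: det_dim_zero)
  qed
  have "det B = det A1 * det (Phi_mat p phi 1 t (s + int i + 1))"
    by (subst eq, rule det_four_block_mat_upper_right_zero)
       (auto simp: A1_def Phi_mat_def d4)
  then show ?thesis using detA1 detA4 by (simp add: B_def M_def)
qed

theorem proposition4:
  fixes p m :: nat and phi :: "nat \<Rightarrow> int \<Rightarrow> complex" and t s :: int
  assumes "p \<ge> 1" and "1 \<le> m" and "m \<le> p" and "t > s"
  shows "xi p phi m t s =
    (\<Sum>j = 1..p - m + 1. phiz p phi (m + j - 1) (s + int j) * xi p phi 1 t (s + int j))"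
proof -
  define n where "n = nat (t - s)"
  define f where "f i = phiz p phi (m + i) (s + int i + 1) * xi p phi 1 t (s + int i + 1)" for i
  have carr: "Phi_mat p phi m t s \<in> carrier_mat n n" unfolding Phi_mat_def n_def by auto
  have "xi p phi m t s = det (Phi_mat p phi m t s)" using assms by (simp add: xi_def)
  also have "\<dots> = (\<Sum>i<n. Phi_mat p phi m t s $$ (i,0) * cofactor (Phi_mat p phi m t s) i 0)"
    by (rule laplace_expansion_column[OF carr]) (use assms in \<open>auto simp: n_def\<close>)
  also have "\<dots> = (\<Sum>i<n. f i)"
  proof (rule sum.cong[OF refl])
    fix i assume "i \<in> {..<n}"
    then have i: "i < n" by simp
    have "cofactor (Phi_mat p phi m t s) i 0 = xi p phi 1 t (s + int i + 1)"
      unfolding cofactor_def using det_minor[OF i n_def]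
      by (simp flip: power_add)
    then show "Phi_mat p phi m t s $$ (i,0) * cofactor (Phi_mat p phi m t s) i 0 = f i"
      using i by (simp add: Phi_entry n_def f_def)
  qed
  also have "\<dots> = (\<Sum>i<n + (p - m + 1). f i)"
  proof (rule sum.mono_neutral_left)
    show "\<forall>i\<in>{..<n + (p - m + 1)} - {..<n}. f i = 0"
      unfolding f_def xi_def n_def by auto
  qed auto
  also have "\<dots> = (\<Sum>i<p - m + 1. f i)"
  proof (rule sum.mono_neutral_right)
    show "\<forall>i\<in>{..<n + (p - m + 1)} - {..<p - m + 1}. f i = 0"
      unfolding f_def phiz_def by auto
  qed auto
  also have "\<dots> = (\<Sum>j = 1..p - m + 1. phiz p phi (m + j - 1) (s + int j) * xi p phi 1 t (s + int j))"
    by (rule sum.reindex_bij_witness[of _ "\<lambda>j. j - 1" Suc]) (auto simp: f_def ac_simps)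
  finally show ?thesis .
qed

end
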